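(* Let $m\ge2$ be even. For integers $i\ge0$ and even $n\ge 2$ define, as functions of $(s,t)$, $$\tilde f_n^i(s,t)=-\sqrt{\tfrac{\pi}{2}}\sum_{\ell=0}^{\lfloor (i-1)/2\rfloor}s^{i-1-2\ell}\frac{1}{2^\ell\ell!}\frac{\Gamma(i+1)}{\Gamma(i-2\ell)}\widetilde J_{(n-2\ell-3)/2}(t)\quad(i\ge1),$$ $$\hat f_n^i(s,t)=(-1)^{n/2+i}\sqrt{\tfrac{\pi}{2}}\sum_{\ell=0}^{\lfloor i/2\rfloor}s^{i-2\ell}\frac{1}{2^\ell\ell!}\frac{\Gamma(i+1)}{\Gamma(i+1-2\ell)}\widetilde J_{(n-2\ell-3)/2}(t),$$ $$g_n^i(s,t)=\sqrt{\tfrac{\pi}{2}}\sum_{\ell=0}^{\lfloor i/2\rfloor}s^{i-2\ell}\frac{1}{2^\ell\ell!}\frac{\Gamma(i+1)}{\Gamma(i+1-2\ell)}\widetilde J_{(n-2\ell-1)/2}(t).$$ Then for every $i$ with $1\le i\le m-2$, $$\tilde f_{m+2}^{i+1}=\frac{i+1}{i}z^{-1}\partial_w\tilde f_m^i,\qquad \hat f_{m+2}^{i+1}=z^{-1}\partial_w\hat f_m^i,\qquad g_{m+2}^{i+1}=-\frac{1}{i+1}z^{-1}\partial_w\tilde f_{m+2}^{i+1},$$ and moreover $$\hat f_{m+2}^1=z^{-1}\partial_w\hat f_m^0,\qquad \tilde f_{m+2}^1=(-1)^{m/2-1}s^{-1}\hat f_{m+2}^1,\qquad g_{m+2}^1=-z^{-1}\partial_w\tilde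 f_{m+2}^1.$$
   Context: $\widetilde J_\alpha(t)=t^{-\alpha}J_\alpha(t)$ with $J_\alpha$ the Bessel function (for $\alpha\ge-1/2$ this is an entire even function of $t$). The variables are related by $s=zw$ and $t=z\sqrt{1-w^2}$, where (in the application) $s=\langle\underline{x},\underline{y}\rangle$, $t=|\underline{x}\wedge\underline{y}|=\sqrt{|\underline{x}|^2|\underline{y}|^2-s^2}$, $z=|\underline{x}||\underline{y}|$, $w=\langle\underline{x}/|\underline{x}|,\underline{y}/|\underline{y}|\rangle$. The operator $z^{-1}\partial_w$ means: regard a function of $(s,t)$ as a function of $(w,z)$ via these substitutions, differentiate with respect to $w$ at fixed $z$, and divide by $z$. *)

theory Defs
  imports "HOL-Analysis.Analysis"
begin

text \<open>Normalised Bessel function: Jt a t = t^(-a) J_a(t), written via the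
  power series of J_a, so that it is the entire even function of t.\<close>
definition Jt :: "real \<Rightarrow> real \<Rightarrow> real" where
  "Jt a t = (\<Sum>k. (-1)^k / (fact k * Gamma (real k + a + 1)) * (t / 2) ^ (2 * k)) / 2 powr a"

definition ftilde :: "nat \<Rightarrow> nat \<Rightarrow> real \<Rightarrow> real \<Rightarrow> real" where
  "ftilde n i s t = - sqrt (pi / 2) *
     (\<Sum>l = 0..(i - 1) div 2. s ^ (i - 1 - 2 * l) * (1 / (2 ^ l * fact l))
        * (Gamma (real i + 1) / Gamma (real i - 2 * real l))
        * Jt ((real n - 2 * real l - 3) / 2) t)"

definition fhat :: "nat \<Rightarrow> nat \<Rightarrow> real \<Rightarrow> real \<Rightarrow> real" where
  "fhat n i s t = (-1) ^ (n div 2 + i) * sqrt (pi / 2) *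
     (\<Sum>l = 0..i div 2. s ^ (i - 2 * l) * (1 / (2 ^ l * fact l))
        * (Gamma (real i + 1) / Gamma (real i + 1 - 2 * real l))
        * Jt ((real n - 2 * real l - 3) / 2) t)"

definition g :: "nat \<Rightarrow> nat \<Rightarrow> real \<Rightarrow> real \<Rightarrow> real" where
  "g n i s t = sqrt (pi / 2) *
     (\<Sum>l = 0..i div 2. s ^ (i - 2 * l) * (1 / (2 ^ l * fact l))
        * (Gamma (real i + 1) / Gamma (real i + 1 - 2 * real l))
        * Jt ((real n - 2 * real l - 1) / 2) t)"

definition zdw :: "(real \<Rightarrow> real \<Rightarrow> real) \<Rightarrow> real \<Rightarrow> real \<Rightarrow> real" where
  "zdw F w z = (1 / z) * deriv (\<lambda>v. F (z * v) (z * sqrt (1 - v^2))) w"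

end

theory Submission
  imports Defs
begin



definition cc :: "real \<Rightarrow> nat \<Rightarrow> real" where
  "cc a k = (-1)^k / (fact k * Gamma (real k + a + 1))"

lemma Gamma_ge1: "x \<ge> 2 \<Longrightarrow> Gamma (x::real) \<ge> 1"
proof -
  assume x: "x \<ge> 2"
  have g2: "Gamma (2::real) = 1" using Gamma_fact[of 1, where 'a=real] by simp
  show ?thesis
  proof (cases "x = 2")
    case True thus ?thesis using g2 by simp
  next
    case False
    hence "Gamma (2::real) < Gamma x" using x by (intro Gamma_real_strict_mono) auto
    thus ?thesis using g2 by simp
  qed
qed

lemma cc_summable: "summable (\<lambda>k. cc a k * K ^ k)"
proof (rule summable_comparison_test')
  show "summable (\<lambda>n. inverse (fact n) * \<bar>K\<bar> ^ n)" using summable_exp[of "\<bar>K\<bar>"] .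
  fix n :: nat assume n: "n \<ge> nat \<lceil>2 - a\<rceil>"
  hence "real n + a + 1 \<ge> 2" by linarith
  hence G: "Gamma (real n + a + 1) \<ge> 1" by (rule Gamma_ge1)
  have "norm (cc a n * K ^ n) = \<bar>K\<bar>^n / (fact n * Gamma (real n + a + 1))"
    using G by (simp add: cc_def abs_mult power_abs)
  also have "\<dots> \<le> \<bar>K\<bar>^n / fact n"
    using G by (intro divide_left_mono) (auto intro!: mult_pos_pos)
  finally show "norm (cc a n * K ^ n) \<le> inverse (fact n) * \<bar>K\<bar> ^ n"
    by (simp add: field_simps)
qed

lemma diffs_cc: "diffs (cc a) = (\<lambda>n. - cc (a + 1) n)"
proof
  fix n
  have e: "real (Suc n) + a + 1 = real n + (a + 1) + 1" by simp
  have f: "fact (Suc n) = real (Suc n) * fact n" by simp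
  have "diffs (cc a) n = real (Suc n) * ((-1)^Suc n / (real (Suc n) * fact n * Gamma (real n + (a + 1) + 1)))"
    unfolding diffs_def cc_def e f by simp
  also have "\<dots> = - cc (a + 1) n" unfolding cc_def by (simp del: of_nat_Suc)
  finally show "diffs (cc a) n = - cc (a + 1) n" .
qed

definition PP :: "real \<Rightarrow> real \<Rightarrow> real" where
  "PP a u = (\<Sum>k. cc a k * u ^ k)"

lemma PP_deriv: "(PP a has_real_derivative (- PP (a+1) u)) (at u)"
proof -
  have "(PP a has_real_derivative (\<Sum>n. diffs (cc a) n * u^n)) (at u)"
    unfolding PP_def by (rule termdiffs_strong_converges_everywhere) (rule cc_summable)
  moreover have "(\<Sum>n. diffs (cc a) n * u^n) = - PP (a+1) u"
    unfolding diffs_cc PP_def using cc_summable[of "a+1" u]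
    by (simp add: suminf_minus[symmetric])
  ultimately show ?thesis by simp
qed

lemma Jt_PP: "Jt a t = PP a ((t/2)^2) / 2 powr a"
  unfolding Jt_def PP_def cc_def by (simp add: power_mult)

lemma Jt_deriv: "((Jt a) has_real_derivative (- t * Jt (a+1) t)) (at t)"
proof -
  have "((\<lambda>t. PP a ((t/2)^2) / 2 powr a) has_real_derivative
          ((- PP (a+1) ((t/2)^2)) * (2 * (t/2) * (1/2)) / 2 powr a)) (at t)"
    by (auto intro!: derivative_eq_intros DERIV_chain2[OF PP_deriv])
  moreover have "(- PP (a+1) ((t/2)^2)) * (2 * (t/2) * (1/2)) / 2 powr a = - t * Jt (a+1) t"
    unfolding Jt_PP by (simp add: powr_add field_simps)
  ultimately show ?thesis unfolding Jt_PP[abs_def] by simp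
qed




definition AA :: "nat \<Rightarrow> nat \<Rightarrow> real" where
  "AA k l = (if 2 * l \<le> k then fact k / (2 ^ l * fact l * fact (k - 2 * l)) else 0)"

lemma term_deriv:
  assumes z: "z > 0" and w: "-1 < w" "w < 1"
  shows "((\<lambda>v. (z * v)^p * Jt a (z * sqrt (1 - v^2))) has_real_derivative
     z * (real p * (z*w)^(p-1) * Jt a (z * sqrt (1 - w^2)) + (z*w)^(p+1) * Jt (a+1) (z * sqrt (1 - w^2)))) (at w)"
proof -
  have pos: "1 - w^2 > 0" using w by (simp add: abs_square_less_1 abs_less_iff)
  have sq: "sqrt (1 - w^2) > 0" using pos by simp
  let ?t = "z * sqrt (1 - w^2)"
  have d: "((\<lambda>v. (z * v)^p * Jt a (z * sqrt (1 - v^2))) has_real_derivative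
     (real p * (z*w)^(p-1) * z) * Jt a ?t + ((- ?t * Jt (a+1) ?t) * (z * (- (2 * w) / (2 * sqrt (1 - w^2))))) * (z*w)^p) (at w)"
  proof -
    have s1: "((\<lambda>v. sqrt (1 - v^2)) has_real_derivative (- (2 * w) / (2 * sqrt (1 - w^2)))) (at w)"
      using pos apply (auto intro!: derivative_eq_intros simp: power2_eq_square)
      by (simp add: divide_inverse mult.commute)
    have s2: "((\<lambda>v. z * sqrt (1 - v^2)) has_real_derivative z * (- (2 * w) / (2 * sqrt (1 - w^2)))) (at w)"
      using DERIV_cmult[OF s1] .
    have j: "((\<lambda>v. Jt a (z * sqrt (1 - v^2))) has_real_derivative (- ?t * Jt (a+1) ?t) * (z * (- (2 * w) / (2 * sqrt (1 - w^2))))) (at w)"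
      by (rule DERIV_chain2[OF Jt_deriv s2])
    have p: "((\<lambda>v. (z * v)^p) has_real_derivative (real p * (z*w)^(p-1) * z)) (at w)"
      by (auto intro!: derivative_eq_intros)
    show ?thesis using DERIV_mult[OF p j] .
  qed
  have e: "(real p * (z*w)^(p-1) * z) * Jt a ?t + ((- ?t * Jt (a+1) ?t) * (z * (- (2 * w) / (2 * sqrt (1 - w^2))))) * (z*w)^p
     = z * (real p * (z*w)^(p-1) * Jt a ?t + (z*w)^(p+1) * Jt (a+1) ?t)"
    using sq by (simp add: field_simps)
  show ?thesis using d unfolding e .
qed

lemma alg: "(a::real) > 0 \<Longrightarrow> b > 0 \<Longrightarrow> p > 0 \<Longrightarrow> x \<ge> 0 \<Longrightarrow> y \<ge> 0 \<Longrightarrow>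
  F/(p*b*((x+2)*(x+1)*a)) * (x+2) * S * X + F/(2*p*((y+1)*b)*a) * S * X
   = ((x+2*y+3)*F)/(2*p*((y+1)*b)*((x+1)*a)) * S * (X::real)"
proof -
  assume h: "a > 0" "b > 0" "p > 0" "x \<ge> 0" "y \<ge> 0"
  define D where "D = 2*p*((y+1)*b)*((x+1)*a)"
  have D: "D > 0" using h unfolding D_def by (intro mult_pos_pos) auto
  have 1: "F/(p*b*((x+2)*(x+1)*a)) * (x+2) = F*(2*(y+1))/D"
    using h unfolding D_def by (simp add: divide_simps; simp add: algebra_simps)
  have 2: "F/(2*p*((y+1)*b)*a) = F*(x+1)/D"
    using h unfolding D_def by (simp add: divide_simps; simp add: algebra_simps)
  have 3: "((x+2*y+3)*F)/(2*p*((y+1)*b)*((x+1)*a)) = (F*(2*(y+1)) + F*(x+1))/D"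
    unfolding D_def by (simp add: algebra_simps)
  show ?thesis unfolding 1 2 3 by (simp add: add_divide_distrib algebra_simps)
qed
lemma coeff:
  "AA k l * real (k - 2*l) * s^(k - 2*l - 1) * X + AA k (Suc l) * s^(k - 2*Suc l + 1) * X
   = AA (k+1) (Suc l) * s^(k + 1 - 2*Suc l) * X"
proof -
  consider "2*l + 2 \<le> k" | "2*l + 1 = k" | "k \<le> 2*l" by linarith
  thus ?thesis
  proof cases
    case 1
    define j where "j = k - 2*l - 2"
    have k: "k = j + 2*l + 2" using 1 unfolding j_def by arith
    have e1: "k - 2*l = j + 2" "k - 2 * Suc l = j" "k + 1 - 2 * Suc l = j + 1" "k - 2*l - 1 = j + 1"
      "k - 2 * Suc l + 1 = j + 1" "k + 1 = Suc k" "j + 2 - 1 = j + 1" using k by auto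
    have f1: "fact (Suc k) = real (j + 2*l + 3) * fact k" using k by simp
    have f2: "fact (j+2) = (real j+2) * (real j+1) * (fact j :: real)" by (simp add: algebra_simps)
    have f3: "fact (j+1) = (real j+1) * (fact j :: real)" by simp
    have f4: "fact (Suc l) = (real l + 1) * (fact l :: real)" by simp
    have f5: "(2::real) ^ Suc l = 2 * 2^l" by simp
    have r: "real (j + 2) = real j + 2" "real (j + 2*l + 3) = real j + 2 * real l + 3" by auto
    have c1: "2 * l \<le> k" "2 * Suc l \<le> k" "2 * Suc l \<le> Suc k" using k by auto
    have "AA k l * real (k - 2*l) * s^(k - 2*l - 1) * X + AA k (Suc l) * s^(k - 2*Suc l + 1) * X
      = fact k/(2^l*fact l*((real j+2)*(real j+1)*fact j)) * (real j+2) * s^(j+1) * X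
        + fact k/(2*2^l*((real l+1)*fact l)*fact j) * s^(j+1) * X"
      unfolding AA_def using c1 by (simp only: if_True e1 f2 f4 f5 r)
    also have "\<dots> = ((real j+2*real l+3)*fact k)/(2*2^l*((real l+1)*fact l)*((real j+1)*fact j)) * s^(j+1) * X"
      by (rule alg) auto
    also have "\<dots> = AA (k+1) (Suc l) * s^(k + 1 - 2*Suc l) * X"
    proof -
      have e3: "Suc k - 2 * Suc l = j + 1" using k by auto
      show ?thesis unfolding AA_def using c1 by (simp only: if_True e1 e3 f1 f3 f4 f5 r)
    qed
    finally show ?thesis .
  next
    case 2
    have e: "k - 2*l = 1" "k - 2*l - 1 = 0" "k + 1 - 2 * Suc l = 0" using 2 by auto
    have c: "2 * l \<le> k" "\<not> 2 * Suc l \<le> k" "2 * Suc l \<le> k + 1" using 2 by auto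
    have f: "fact (k+1) = real (2 * Suc l) * fact k" using 2 by (simp add: algebra_simps)
    have f4: "fact (Suc l) = real (Suc l) * (fact l :: real)" by simp
    have q: "real (2 * Suc l) * fact k / (2 ^ Suc l * (real (Suc l) * fact l) * fact 0)
       = fact k / (2^l * fact l * fact (1::nat))"
    proof -
      have "real (2 * Suc l) * fact k / (2 ^ Suc l * (real (Suc l) * fact l) * fact 0)
         = (real (2 * Suc l) * fact k) / (real (2 * Suc l) * (2^l * fact l))"
        by (simp add: algebra_simps)
      also have "\<dots> = fact k / (2^l * fact l)"
        by (rule mult_divide_mult_cancel_left) simp
      finally show ?thesis by simp
    qed
    show ?thesis unfolding AA_def using c apply (simp only: if_True if_False e f f4)
      unfolding q by simp
  next
    case 3
    thus ?thesis unfolding AA_def by auto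
  qed
qed



definition TT :: "nat \<Rightarrow> nat \<Rightarrow> real \<Rightarrow> real \<Rightarrow> real" where
  "TT k n s t = (\<Sum>l\<le>k div 2. s^(k - 2*l) * AA k l * Jt ((real n - 2 * real l - 3) / 2) t)"

lemma AA_zero: "k < 2 * l \<Longrightarrow> AA k l = 0" unfolding AA_def by auto

lemma TT_ext: "k div 2 < M \<Longrightarrow>
  TT k n s t = (\<Sum>l<M. s^(k - 2*l) * AA k l * Jt ((real n - 2 * real l - 3) / 2) t)"
  unfolding TT_def
  by (rule sum.mono_neutral_left) (auto simp: AA_zero)

lemma comb:
  assumes N: "k div 2 < N"
  shows "(\<Sum>l<Suc N. AA k l * (real (k - 2*l) * s^(k - 2*l - 1) * J ((real n - 2 * real l - 3) / 2)
            + s^(k - 2*l + 1) * J ((real n - 2 * real l - 3) / 2 + 1)))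
       = (\<Sum>l<Suc N. s^(k + 1 - 2*l) * AA (k+1) l * J ((real (n+2) - 2 * real l - 3) / 2))"
    (is "?L = ?R")
proof -
  define A1 where "A1 l = AA k l * real (k - 2*l) * s^(k - 2*l - 1) * J ((real n - 2 * real l - 3) / 2)" for l
  define A2 where "A2 l = AA k l * s^(k - 2*l + 1) * J ((real n - 2 * real l - 3) / 2 + 1)" for l
  define R where "R l = s^(k + 1 - 2*l) * AA (k+1) l * J ((real (n+2) - 2 * real l - 3) / 2)" for l
  have "?L = (\<Sum>l<Suc N. A1 l) + (\<Sum>l<Suc N. A2 l)"
    unfolding A1_def A2_def by (simp add: sum.distrib algebra_simps)
  also have "(\<Sum>l<Suc N. A1 l) = (\<Sum>l<N. A1 l)"
    using N by (simp add: A1_def AA_zero)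
  also have "(\<Sum>l<Suc N. A2 l) = A2 0 + (\<Sum>l<N. A2 (Suc l))"
    by (rule sum.lessThan_Suc_shift)
  also have "A2 0 = R 0"
  proof -
    have h: "(real n - 2 * real (0::nat) - 3) / 2 + 1 = (real (n+2) - 2 * real (0::nat) - 3) / 2" by (simp add: field_simps)
    show ?thesis unfolding A2_def R_def h by (simp add: AA_def)
  qed
  also have "(\<Sum>l<N. A1 l) + (R 0 + (\<Sum>l<N. A2 (Suc l))) = R 0 + (\<Sum>l<N. A1 l + A2 (Suc l))"
    by (simp add: sum.distrib)
  also have "(\<Sum>l<N. A1 l + A2 (Suc l)) = (\<Sum>l<N. R (Suc l))"
  proof (rule sum.cong)
    fix l
    have a1: "(real n - 2 * real l - 3) / 2 = (real (n+2) - 2 * real (Suc l) - 3) / 2" by (simp add: field_simps)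
    have a2: "(real n - 2 * real (Suc l) - 3) / 2 + 1 = (real (n+2) - 2 * real (Suc l) - 3) / 2" by (simp add: field_simps)
    show "A1 l + A2 (Suc l) = R (Suc l)"
      unfolding A1_def A2_def R_def a1 a2
      using coeff[of k l s "J ((real (n+2) - 2 * real (Suc l) - 3) / 2)"]
      by (simp add: algebra_simps)
  qed simp
  also have "R 0 + (\<Sum>l<N. R (Suc l)) = ?R"
    unfolding R_def by (rule sum.lessThan_Suc_shift[symmetric])
  finally show ?thesis .
qed

lemma Dlem:
  assumes z: "z > 0" and w: "-1 < w" "w < 1"
  shows "zdw (\<lambda>s t. c * TT k n s t) w z = c * TT (k+1) (n+2) (z*w) (z * sqrt (1 - w^2))"
proof -
  define N where "N = k + 2"
  have N: "k div 2 < N" "(k+1) div 2 < Suc N" unfolding N_def by auto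
  let ?a = "\<lambda>l. (real n - 2 * real l - 3) / 2"
  let ?t = "z * sqrt (1 - w^2)"
  have f: "(\<lambda>v. c * TT k n (z * v) (z * sqrt (1 - v^2))) =
     (\<lambda>v. c * (\<Sum>l<Suc N. AA k l * ((z * v)^(k - 2*l) * Jt (?a l) (z * sqrt (1 - v^2)))))"
    using N by (simp add: TT_ext[of k "Suc N"] algebra_simps)
  have d: "((\<lambda>v. c * (\<Sum>l<Suc N. AA k l * ((z * v)^(k - 2*l) * Jt (?a l) (z * sqrt (1 - v^2))))) has_real_derivative
     c * (\<Sum>l<Suc N. AA k l * (z * (real (k - 2*l) * (z*w)^(k - 2*l - 1) * Jt (?a l) ?t + (z*w)^(k - 2*l + 1) * Jt (?a l + 1) ?t)))) (at w)"
    by (intro DERIV_cmult DERIV_sum term_deriv z w)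
  have "zdw (\<lambda>s t. c * TT k n s t) w z =
     (1/z) * (c * (\<Sum>l<Suc N. AA k l * (z * (real (k - 2*l) * (z*w)^(k - 2*l - 1) * Jt (?a l) ?t + (z*w)^(k - 2*l + 1) * Jt (?a l + 1) ?t))))"
    unfolding zdw_def f using DERIV_imp_deriv[OF d] by simp
  also have "\<dots> = c * (\<Sum>l<Suc N. AA k l * (real (k - 2*l) * (z*w)^(k - 2*l - 1) * Jt (?a l) ?t + (z*w)^(k - 2*l + 1) * Jt (?a l + 1) ?t))"
  proof -
    have "(\<Sum>l<Suc N. AA k l * (z * (real (k - 2*l) * (z*w)^(k - 2*l - 1) * Jt (?a l) ?t + (z*w)^(k - 2*l + 1) * Jt (?a l + 1) ?t)))
      = z * (\<Sum>l<Suc N. AA k l * (real (k - 2*l) * (z*w)^(k - 2*l - 1) * Jt (?a l) ?t + (z*w)^(k - 2*l + 1) * Jt (?a l + 1) ?t))"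
      unfolding sum_distrib_left by (rule sum.cong) (simp_all add: algebra_simps)
    thus ?thesis using z by simp
  qed
  also have "\<dots> = c * (\<Sum>l<Suc N. (z*w)^(k + 1 - 2*l) * AA (k+1) l * Jt ((real (n+2) - 2 * real l - 3) / 2) ?t)"
    using comb[OF N(1), of "z*w" "\<lambda>a. Jt a ?t" n] by simp
  also have "\<dots> = c * TT (k+1) (n+2) (z*w) ?t"
    using TT_ext[OF N(2)] by simp
  finally show ?thesis .
qed




lemma Gamma_nat1: "Gamma (real j + 1) = fact j"
  using Gamma_fact[of j, where 'a=real] by (simp add: add.commute)

lemma fhat_TT: "fhat n i = (\<lambda>s t. ((-1)^(n div 2 + i) * sqrt (pi/2)) * TT i n s t)"
proof (intro ext)
  fix s t
  have "\<And>l. l \<in> {0..i div 2} \<Longrightarrow>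
    s ^ (i - 2 * l) * (1 / (2 ^ l * fact l)) * (Gamma (real i + 1) / Gamma (real i + 1 - 2 * real l))
        * Jt ((real n - 2 * real l - 3) / 2) t = s^(i - 2*l) * AA i l * Jt ((real n - 2 * real l - 3) / 2) t"
  proof -
    fix l assume "l \<in> {0..i div 2}"
    hence l: "2 * l \<le> i" by auto
    hence "real i + 1 - 2 * real l = real (i - 2*l) + 1" by auto
    hence G: "Gamma (real i + 1 - 2 * real l) = fact (i - 2*l)" by (simp only: Gamma_nat1)
    show "?thesis l" using l unfolding AA_def by (simp add: Gamma_nat1 G)
  qed
  hence "(\<Sum>l = 0..i div 2. s ^ (i - 2 * l) * (1 / (2 ^ l * fact l)) * (Gamma (real i + 1) / Gamma (real i + 1 - 2 * real l))
        * Jt ((real n - 2 * real l - 3) / 2) t) = TT i n s t"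
    unfolding TT_def atMost_atLeast0 by (rule sum.cong[OF refl])
  thus "fhat n i s t = ((-1)^(n div 2 + i) * sqrt (pi/2)) * TT i n s t"
    unfolding fhat_def by simp
qed

lemma g_TT: "g n i = (\<lambda>s t. sqrt (pi/2) * TT i (n+2) s t)"
proof (intro ext)
  fix s t
  have "\<And>l. l \<in> {0..i div 2} \<Longrightarrow>
    s ^ (i - 2 * l) * (1 / (2 ^ l * fact l)) * (Gamma (real i + 1) / Gamma (real i + 1 - 2 * real l))
        * Jt ((real n - 2 * real l - 1) / 2) t = s^(i - 2*l) * AA i l * Jt ((real (n+2) - 2 * real l - 3) / 2) t"
  proof -
    fix l assume "l \<in> {0..i div 2}"
    hence l: "2 * l \<le> i" by auto
    hence "real i + 1 - 2 * real l = real (i - 2*l) + 1" by auto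
    hence G: "Gamma (real i + 1 - 2 * real l) = fact (i - 2*l)" by (simp only: Gamma_nat1)
    moreover have "(real n - 2 * real l - 1) / 2 = (real (n+2) - 2 * real l - 3) / 2" by simp
    ultimately show "?thesis l" using l unfolding AA_def by (simp add: Gamma_nat1 G)
  qed
  hence "(\<Sum>l = 0..i div 2. s ^ (i - 2 * l) * (1 / (2 ^ l * fact l)) * (Gamma (real i + 1) / Gamma (real i + 1 - 2 * real l))
        * Jt ((real n - 2 * real l - 1) / 2) t) = TT i (n+2) s t"
    unfolding TT_def atMost_atLeast0 by (rule sum.cong[OF refl])
  thus "g n i s t = sqrt (pi/2) * TT i (n+2) s t"
    unfolding g_def by simp
qed

lemma ftilde_TT: "ftilde n (Suc k) = (\<lambda>s t. (- sqrt (pi/2) * real (Suc k)) * TT k n s t)"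
proof (intro ext)
  fix s t
  have "\<And>l. l \<in> {0..k div 2} \<Longrightarrow>
    s ^ (Suc k - 1 - 2 * l) * (1 / (2 ^ l * fact l)) * (Gamma (real (Suc k) + 1) / Gamma (real (Suc k) - 2 * real l))
        * Jt ((real n - 2 * real l - 3) / 2) t = real (Suc k) * (s^(k - 2*l) * AA k l * Jt ((real n - 2 * real l - 3) / 2) t)"
  proof -
    fix l assume "l \<in> {0..k div 2}"
    hence l: "2 * l \<le> k" by auto
    hence "real (Suc k) - 2 * real l = real (k - 2*l) + 1" by auto
    hence G: "Gamma (real (Suc k) - 2 * real l) = fact (k - 2*l)" by (simp only: Gamma_nat1)
    moreover have "Gamma (real (Suc k) + 1) = real (Suc k) * fact k"
      using Gamma_nat1[of "Suc k"] by simp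
    ultimately show "?thesis l" using l unfolding AA_def by (simp add: G)
  qed
  hence "(\<Sum>l = 0..(Suc k - 1) div 2. s ^ (Suc k - 1 - 2 * l) * (1 / (2 ^ l * fact l)) * (Gamma (real (Suc k) + 1) / Gamma (real (Suc k) - 2 * real l))
        * Jt ((real n - 2 * real l - 3) / 2) t) = real (Suc k) * TT k n s t"
    unfolding TT_def atMost_atLeast0 sum_distrib_left by (simp only: diff_Suc_1) (rule sum.cong[OF refl])
  thus "ftilde n (Suc k) s t = (- sqrt (pi/2) * real (Suc k)) * TT k n s t"
    unfolding ftilde_def by simp
qed




theorem proposition4p1:
  fixes m :: nat
  assumes "even m" and "m \<ge> 2"
  shows "(\<forall>i. 1 \<le> i \<and> i \<le> m - 2 \<longrightarrow>
            (\<forall>z w. z > 0 \<and> -1 < w \<and> w < 1 \<longrightarrow>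
               (let s = z * w; t = z * sqrt (1 - w^2) in
                  ftilde (m + 2) (i + 1) s t = (real i + 1) / real i * zdw (ftilde m i) w z
                \<and> fhat (m + 2) (i + 1) s t = zdw (fhat m i) w z
                \<and> g (m + 2) (i + 1) s t = - (1 / (real i + 1)) * zdw (ftilde (m + 2) (i + 1)) w z)))
       \<and> (\<forall>z w. z > 0 \<and> -1 < w \<and> w < 1 \<longrightarrow>
               (let s = z * w; t = z * sqrt (1 - w^2) in
                  fhat (m + 2) 1 s t = zdw (fhat m 0) w z
                \<and> g (m + 2) 1 s t = - zdw (ftilde (m + 2) 1) w z))
       \<and> (\<forall>s t. s \<noteq> 0 \<longrightarrow>
               ftilde (m + 2) 1 s t = (-1) ^ (m div 2 - 1) * (1 / s) * fhat (m + 2) 1 s t)"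
proof (intro conjI allI impI)
  have md: "(m + 2) div 2 = m div 2 + 1" by simp
  fix i :: nat and z w :: real
  assume i: "1 \<le> i \<and> i \<le> m - 2" and zw: "0 < z \<and> - 1 < w \<and> w < 1"
  obtain k where ik: "i = Suc k" using i by (metis Suc_pred' less_le_trans zero_less_one)
  have z: "z > 0" and w: "-1 < w" "w < 1" using zw by auto
  have ip: "real i \<noteq> 0" using ik by simp
  show "let s = z * w; t = z * sqrt (1 - w^2) in
                  ftilde (m + 2) (i + 1) s t = (real i + 1) / real i * zdw (ftilde m i) w z
                \<and> fhat (m + 2) (i + 1) s t = zdw (fhat m i) w z
                \<and> g (m + 2) (i + 1) s t = - (1 / (real i + 1)) * zdw (ftilde (m + 2) (i + 1)) w z"
    unfolding Let_def
  proof (intro conjI)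
    show "ftilde (m + 2) (i + 1) (z * w) (z * sqrt (1 - w^2)) = (real i + 1) / real i * zdw (ftilde m i) w z"
      unfolding ik Suc_eq_plus1[symmetric] ftilde_TT Dlem[OF z w] using ik by (simp add: field_simps)
    show "fhat (m + 2) (i + 1) (z * w) (z * sqrt (1 - w^2)) = zdw (fhat m i) w z"
      unfolding fhat_TT Dlem[OF z w] md by simp
    show "g (m + 2) (i + 1) (z * w) (z * sqrt (1 - w^2)) = - (1 / (real i + 1)) * zdw (ftilde (m + 2) (i + 1)) w z"
      unfolding g_TT Suc_eq_plus1[symmetric] ftilde_TT Dlem[OF z w]
      by (simp add: field_simps add_ac)
  qed
next
  fix z w :: real
  assume zw: "0 < z \<and> - 1 < w \<and> w < 1"
  have z: "z > 0" and w: "-1 < w" "w < 1" using zw by auto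
  have md: "(m + 2) div 2 = m div 2 + 1" by simp
  show "let s = z * w; t = z * sqrt (1 - w^2) in
                  fhat (m + 2) 1 s t = zdw (fhat m 0) w z
                \<and> g (m + 2) 1 s t = - zdw (ftilde (m + 2) 1) w z"
    unfolding Let_def
  proof (intro conjI)
    show "fhat (m + 2) 1 (z * w) (z * sqrt (1 - w^2)) = zdw (fhat m 0) w z"
      unfolding fhat_TT Dlem[OF z w] md by simp
    show "g (m + 2) 1 (z * w) (z * sqrt (1 - w^2)) = - zdw (ftilde (m + 2) 1) w z"
      unfolding g_TT One_nat_def ftilde_TT Dlem[OF z w] by (simp add: add_ac)
  qed
next
  fix s t :: real assume s: "s \<noteq> 0"
  obtain q where mq: "m = 2 * Suc q" using assms
    by (metis dvd_def Suc_pred' le_zero_eq mult_eq_0_iff neq0_conv not_numeral_le_zero)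
  have e: "(m+2) div 2 + 1 = Suc (Suc (Suc q))" "m div 2 - 1 = q" using mq by auto
  show "ftilde (m + 2) 1 s t = (-1) ^ (m div 2 - 1) * (1 / s) * fhat (m + 2) 1 s t"
    unfolding fhat_TT One_nat_def ftilde_TT e
    using s mq by (simp add: TT_def AA_def)
qed


end
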